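(* For all integers $m,n\ge1$, every function $\Psi:\mathbb{Z}^n\to\mathbb{R}_{>0}$ and each $\circ\in\{\ ,\ ',\ ''\}$, the set $\mathcal{F}^\circ_{n,m}(\Psi)=\bigcup_{k=1}^\infty\mathcal{A}^\circ_{n,m}(k\Psi)$ has Lebesgue measure $0$ or $1$.
   Context: Let $m,n\ge1$ be integers. Points $\mathbf{X}\in[0,1]^{nm}$ are regarded as real $n\times m$ matrices, $\mathbf{q}\in\mathbb{Z}^n$ as a row vector, so $\mathbf{q}\mathbf{X}\in\mathbb{R}^m$; $|\cdot|$ denotes the supremum norm on $\mathbb{R}^m$. For $\Psi:\mathbb{Z}^n\to\mathbb{R}_{>0}$ consider the inequality ( * ) $|\mathbf{q}\mathbf{X}+\mathbf{p}|<\Psi(\mathbf{q})$, with $\mathbf{p}=(p_1,\dots,p_m)\in\mathbb{Z}^m$, $\mathbf{q}\in\mathbb{Z}^n\setminus\{\mathbf{0}\}$. $\mathcal{A}_{n,m}(\Psi)$ is the set of $\mathbf{X}\in[0,1]^{nm}$ for which ( * ) holds for infinitely many pairs $(\mathbf{p},\mathbf{q})$; $\mathcal{A}'_{n,m}(\Psi)$ is the set of $\mathbf{X}\in[0,1]^{nm}$ for which ( * ) holds for infinitely many $(\mathbf{p},\mathbf{q})$ with $\gcd(\mathbf{p},\mathbf{q})=1$ (the gcd of all components of $\mathbf{p}$ and $\mathbf{q}$); $\mathcal{A}''_{n,m}(\Psi)$ is the set of $\mathbf{X}\in[0,1]^{nm}$ for which ( * ) holds for infinitely many $(\mathbf{p},\mathbf{q})$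 with $\gcd(p_j,\mathbf{q})=1$ for every $j=1,\dots,m$. $\mathcal{A}^\circ_{n,m}$ denotes any one of $\mathcal{A}_{n,m},\mathcal{A}'_{n,m},\mathcal{A}''_{n,m}$, and $k\Psi$ is the function $\mathbf{q}\mapsto k\Psi(\mathbf{q})$. *)

theory Defs
  imports "HOL-Analysis.Analysis"
begin

text \<open>Matrices X in [0,1]^{nm} are elements of real^'m^'n (n rows indexed by 'n,
  m columns indexed by 'm); q in Z^n is int^'n, p in Z^m is int^'m.\<close>

definition row_times :: "int ^ 'n \<Rightarrow> real ^ 'm ^ 'n \<Rightarrow> real ^ 'm" where
  "row_times q X = (\<chi> j. \<Sum>i\<in>UNIV. real_of_int (q $ i) * X $ i $ j)"

definition sup_norm :: "real ^ 'm \<Rightarrow> real" where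
  "sup_norm v = Max (range (\<lambda>j. \<bar>v $ j\<bar>))"

definition unit_cube :: "(real ^ 'm ^ 'n) set" where
  "unit_cube = {X. \<forall>i j. 0 \<le> X $ i $ j \<and> X $ i $ j \<le> 1}"

datatype variant = Plain | Coprime | CoprimeEach

definition admissible :: "variant \<Rightarrow> int ^ 'm \<Rightarrow> int ^ 'n \<Rightarrow> bool" where
  "admissible v p q = (case v of
      Plain \<Rightarrow> True
    | Coprime \<Rightarrow> Gcd (range (\<lambda>j. p $ j) \<union> range (\<lambda>i. q $ i)) = 1
    | CoprimeEach \<Rightarrow> (\<forall>j. Gcd (insert (p $ j) (range (\<lambda>i. q $ i))) = 1))"

definition approx_set :: "variant \<Rightarrow> (int ^ 'n \<Rightarrow> real) \<Rightarrow> (real ^ 'm ^ 'n) set" where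
  "approx_set v \<Psi> = {X \<in> unit_cube.
     infinite {(p :: int ^ 'm, q :: int ^ 'n). q \<noteq> 0 \<and> admissible v p q \<and>
        sup_norm (row_times q X + (\<chi> j. real_of_int (p $ j))) < \<Psi> q}}"

definition F_set :: "variant \<Rightarrow> (int ^ 'n \<Rightarrow> real) \<Rightarrow> (real ^ 'm ^ 'n) set" where
  "F_set v \<Psi> = (\<Union>k\<in>{1::nat..}. approx_set v (\<lambda>q. real k * \<Psi> q))"

end

theory Submission
  imports Defs
begin


definition ofv :: "int^'m^'n \<Rightarrow> real^'m^'n" where "ofv w = (\<chi> i j. real_of_int (w$i$j))"
definition vfloor :: "real^'m^'n \<Rightarrow> int^'m^'n" where "vfloor X = (\<chi> i j. \<lfloor>X$i$j\<rfloor>)"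
definition vfrac :: "real^'m^'n \<Rightarrow> real^'m^'n" where "vfrac X = (\<chi> i j. frac (X$i$j))"
definition hcube :: "(real^'m^'n) set" where "hcube = {X. \<forall>i j. 0 \<le> X$i$j \<and> X$i$j < 1}"
definition cell :: "nat \<Rightarrow> int^'m^'n \<Rightarrow> (real^'m^'n) set" where
  "cell s w = {X. \<forall>i j. \<lfloor>2^s * X$i$j\<rfloor> = w$i$j}"
definition Wset :: "nat \<Rightarrow> (int^'m^'n) set" where
  "Wset s = {w. \<forall>i j. 0 \<le> w$i$j \<and> w$i$j < 2^s}"

lemma comp_meas[measurable]: "(\<lambda>X :: real^'m^'n. X$i$j) \<in> borel_measurable borel"
  by (intro borel_measurable_continuous_onI continuous_intros)

lemma inner_nested: "(X :: real^'m^'n) \<bullet> axis i (axis j 1) = X$i$j"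
  by (simp add: inner_axis)

lemma mem_cbox_nested: "(X :: real^'m^'n) \<in> cbox a b \<longleftrightarrow> (\<forall>i j. a$i$j \<le> X$i$j \<and> X$i$j \<le> b$i$j)"
  by (auto simp: mem_box Basis_vec_def inner_axis)

lemma mem_box_nested: "(X :: real^'m^'n) \<in> box a b \<longleftrightarrow> (\<forall>i j. a$i$j < X$i$j \<and> X$i$j < b$i$j)"
  by (auto simp: mem_box Basis_vec_def inner_axis)

lemma One_nested: "(One :: real^'m^'n)$i$j = 1"
proof -
  have "axis i (axis j 1) \<in> (Basis :: (real^'m^'n) set)" by (auto simp: Basis_vec_def)
  from inner_sum_Basis[OF this] show ?thesis by (simp only: inner_nested)
qed

lemma One_sum_nested[simp]: "(\<Sum>x\<in>(Basis :: (real^'m^'n) set). x$i$j) = 1"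
  using One_nested[of i j] by simp

lemma unit_cube_cbox: "(unit_cube :: (real^'m^'n) set) = cbox 0 One"
  by (auto simp: unit_cube_def mem_cbox_nested One_nested)

lemma hcube_sub: "(hcube :: (real^'m^'n) set) \<subseteq> cbox 0 One" "box 0 One \<subseteq> (hcube :: (real^'m^'n) set)"
  by (auto simp: hcube_def mem_cbox_nested mem_box_nested One_nested less_imp_le)

lemma hcube_borel: "(hcube :: (real^'m^'n) set) \<in> sets borel"
  unfolding hcube_def by measurable

lemma measure_unit: "measure lebesgue (cbox 0 (One :: real^'m^'n)) = 1"
  by (metis cbox_borel content_unit measure_completion sets_lborel)

lemma finite_vec_set: "finite S \<Longrightarrow> finite {v :: 'a^'k. \<forall>i. v$i \<in> S}"
proof -
  assume S: "finite S"
  have "{v :: 'a^'k. \<forall>i. v$i \<in> S} \<subseteq> vec_lambda ` (PiE UNIV (\<lambda>_. S))"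
  proof
    fix v :: "'a^'k" assume "v \<in> {v. \<forall>i. v$i \<in> S}"
    then have "(\<lambda>i. v$i) \<in> PiE UNIV (\<lambda>_. S)" by auto
    then show "v \<in> vec_lambda ` PiE UNIV (\<lambda>_. S)" by (metis image_eqI vec_lambda_eta)
  qed
  then show ?thesis by (rule finite_subset) (simp add: finite_PiE S)
qed

lemma finite_vec2_set: "finite S \<Longrightarrow> finite {v :: 'a^'m^'n. \<forall>i j. v$i$j \<in> S}"
proof -
  assume S: "finite S"
  have "{v :: 'a^'m^'n. \<forall>i j. v$i$j \<in> S} = {v. \<forall>i. v$i \<in> {u. \<forall>j. u$j \<in> S}}" by auto
  then show ?thesis using finite_vec_set[OF finite_vec_set[OF S]] by simp
qed

lemma finite_Wset: "finite (Wset s)"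
proof -
  have "Wset s \<subseteq> {v. \<forall>i j. v$i$j \<in> {0..<2^s}}" by (auto simp: Wset_def)
  then show ?thesis by (rule finite_subset) (intro finite_vec2_set, simp)
qed

lemma pow2_pos: "(0::real) < 2^s" by simp

lemma cell_image: "cell s w = (\<lambda>Y. (1/2^s) *\<^sub>R Y + (1/2^s) *\<^sub>R ofv w) ` hcube"
proof (intro equalityI subsetI)
  fix X assume X: "X \<in> cell s w"
  let ?Y = "(2^s) *\<^sub>R X - ofv w"
  have "?Y \<in> hcube"
    unfolding hcube_def
  proof (intro CollectI allI)
    fix i j
    have "of_int (w$i$j) \<le> 2^s*X$i$j \<and> 2^s*X$i$j < of_int (w$i$j) + 1"
      using X by (simp add: cell_def floor_eq_iff)
    then show "0 \<le> ?Y$i$j \<and> ?Y$i$j < 1" by (simp add: ofv_def)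
  qed
  moreover have "X = (1/2^s) *\<^sub>R ?Y + (1/2^s) *\<^sub>R ofv w"
    by (simp add: algebra_simps)
  ultimately show "X \<in> (\<lambda>Y. (1/2^s) *\<^sub>R Y + (1/2^s) *\<^sub>R ofv w) ` hcube" by blast
next
  fix X assume "X \<in> (\<lambda>Y. (1/2^s) *\<^sub>R Y + (1/2^s) *\<^sub>R ofv w) ` hcube"
  then obtain Y where Y: "Y \<in> hcube" and X: "X = (1/2^s) *\<^sub>R Y + (1/2^s) *\<^sub>R ofv w" by blast
  have "\<lfloor>2^s * X$i$j\<rfloor> = w$i$j" for i j
  proof -
    have "2^s * X$i$j = Y$i$j + of_int (w$i$j)"
      using X by (simp add: ofv_def field_simps)
    then show ?thesis using Y by (simp add: hcube_def floor_eq_iff)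
  qed
  then show "X \<in> cell s w" by (simp add: cell_def)
qed

lemma hcube_lmeasurable: "(hcube :: (real^'m^'n) set) \<in> lmeasurable"
  by (rule fmeasurableI2[OF lmeasurable_cbox hcube_sub(1)]) (simp add: hcube_borel)

lemma measure_hcube: "measure lebesgue (hcube :: (real^'m^'n) set) = 1"
proof -
  have "measure lebesgue (hcube :: (real^'m^'n) set) = measure lebesgue (cbox 0 (One :: real^'m^'n))"
  proof (rule measure_eq_AE)
    have "AE x in lebesgue. x \<notin> cbox 0 (One :: real^'m^'n) - box 0 One"
      using null_sets_cbox_Diff_box[of "0::real^'m^'n" One]
      by (intro AE_not_in) (simp add: null_sets_completionI)
    then show "AE x in lebesgue. (x \<in> (hcube :: (real^'m^'n) set)) = (x \<in> cbox 0 One)"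
      by eventually_elim (use hcube_sub in auto)
  qed (auto simp: hcube_borel)
  then show ?thesis using measure_unit by simp
qed

lemma emeasure_cell: "emeasure lebesgue (cell s w :: (real^'m^'n) set) = ennreal ((1/2^s)^DIM(real^'m^'n))"
proof -
  have "emeasure lebesgue (cell s w :: (real^'m^'n) set) = ennreal (\<bar>1/2^s\<bar>^DIM(real^'m^'n)) * emeasure lebesgue (hcube :: (real^'m^'n) set)"
    unfolding cell_image using emeasure_lebesgue_affine[of "1/2^s" "(1/2^s) *\<^sub>R ofv w" hcube] by simp
  also have "emeasure lebesgue (hcube :: (real^'m^'n) set) = 1"
    using measure_hcube hcube_lmeasurable by (metis emeasure_eq_measure2 ennreal_1)
  finally show ?thesis by simp
qed

lemma cell_borel: "cell s w \<in> sets borel"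
  unfolding cell_def by measurable

lemma cell_lmeasurable: "cell s w \<in> lmeasurable"
  using emeasure_cell[of s w] cell_borel[of s w]
  by (intro fmeasurableI) auto

lemma measure_cell: "measure lebesgue (cell s w :: (real^'m^'n) set) = (1/2^s)^DIM(real^'m^'n)"
  using emeasure_cell[of s w] cell_lmeasurable[of s w]
  by (simp add: emeasure_eq_measure2)

lemma hcube_Union_cells: "(hcube :: (real^'m^'n) set) = (\<Union>w\<in>Wset s. cell s w)"
proof (intro equalityI subsetI)
  fix X :: "real^'m^'n" assume X: "X \<in> hcube"
  let ?w = "(\<chi> i j. \<lfloor>2^s * X$i$j\<rfloor>) :: int^'m^'n"
  have "?w \<in> Wset s"
  proof -
    have "0 \<le> \<lfloor>2^s * X$i$j\<rfloor> \<and> \<lfloor>2^s * X$i$j\<rfloor> < 2^s" for i j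
    proof -
      have "0 \<le> X$i$j" "X$i$j < 1" using X by (auto simp: hcube_def)
      then have "0 \<le> 2^s * X$i$j" "2^s * X$i$j < 2^s" by auto
      then show ?thesis by (simp add: floor_less_iff) 
    qed
    then show ?thesis by (simp add: Wset_def)
  qed
  moreover have "X \<in> cell s ?w" by (simp add: cell_def)
  ultimately show "X \<in> (\<Union>w\<in>Wset s. cell s w)" by blast
next
  fix X :: "real^'m^'n" assume "X \<in> (\<Union>w\<in>Wset s. cell s w)"
  then obtain w where w: "w \<in> Wset s" and X: "X \<in> cell s w" by blast
  have "0 \<le> X$i$j \<and> X$i$j < 1" for i j
  proof -
    have a: "\<lfloor>2^s * X$i$j\<rfloor> = w$i$j" using X by (simp add: cell_def)
    have b: "0 \<le> w$i$j" "w$i$j < 2^s" using w by (auto simp: Wset_def)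
    have "0 \<le> 2^s * X$i$j" using a b by linarith
    moreover have "2^s * X$i$j < 2^s"
    proof -
      have "w$i$j + 1 \<le> 2^s" using b by simp
      then have "real_of_int (w$i$j) + 1 \<le> 2^s" by (metis of_int_le_iff of_int_add of_int_1 of_int_numeral of_int_power)
      then show ?thesis using a by linarith
    qed
    ultimately show ?thesis using pow2_pos[of s] by (simp add: zero_le_mult_iff)
  qed
  then show "X \<in> hcube" by (simp add: hcube_def)
qed

lemma cells_disjoint: "w \<noteq> w' \<Longrightarrow> cell s w \<inter> cell s w' = {}"
  by (auto simp: cell_def vec_eq_iff)

lemma measure_split_cells:
  assumes G: "G \<in> sets lebesgue" "G \<subseteq> (hcube :: (real^'m^'n) set)" and I: "I \<subseteq> Wset s"
  shows "measure lebesgue (\<Union>w\<in>I. G \<inter> cell s w) = (\<Sum>w\<in>I. measure lebesgue (G \<inter> cell s w))"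
proof (rule measure_negligible_finite_Union_image)
  show "finite I" using I finite_Wset finite_subset by blast
  show "G \<inter> cell s w \<in> lmeasurable" for w
    by (rule fmeasurableI2[OF cell_lmeasurable[of s w]]) (use G cell_lmeasurable[of s w] in \<open>auto intro!: sets.Int dest: fmeasurableD\<close>)
  show "pairwise (\<lambda>x y. negligible (G \<inter> cell s x \<inter> (G \<inter> cell s y))) I"
    unfolding pairwise_def
  proof (intro ballI impI)
    fix x y :: "int^'m^'n" assume "x \<noteq> y"
    then have "G \<inter> cell s x \<inter> (G \<inter> cell s y) = {}" using cells_disjoint[of x y s] by blast
    then show "negligible (G \<inter> cell s x \<inter> (G \<inter> cell s y))" by simp
  qed
qed

lemma measure_sum_cells:
  assumes G: "G \<in> sets lebesgue" "G \<subseteq> (hcube :: (real^'m^'n) set)"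
  shows "measure lebesgue G = (\<Sum>w\<in>Wset s. measure lebesgue (G \<inter> cell s w))"
proof -
  have "G = (\<Union>w\<in>Wset s. G \<inter> cell s w)" using G hcube_Union_cells[of s] by blast
  then show ?thesis using measure_split_cells[OF G order_refl] by metis
qed

lemma card_Wset_measure: "real (card (Wset s :: (int^'m^'n) set)) * (1/2^s)^DIM(real^'m^'n) = 1"
proof -
  have "1 = measure lebesgue (hcube :: (real^'m^'n) set)" using measure_hcube by simp
  also have "\<dots> = (\<Sum>w\<in>(Wset s :: (int^'m^'n) set). measure lebesgue (hcube \<inter> cell s w))"
    by (rule measure_sum_cells) (auto simp: hcube_borel)
  also have "\<dots> = (\<Sum>w\<in>(Wset s :: (int^'m^'n) set). (1/2^s)^DIM(real^'m^'n))"
  proof (rule sum.cong)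
    fix w :: "int^'m^'n" assume "w \<in> Wset s"
    then have "hcube \<inter> cell s w = cell s w" using hcube_Union_cells[of s] by blast
    then show "measure lebesgue (hcube \<inter> cell s w) = (1/2^s)^DIM(real^'m^'n)" by (simp add: measure_cell)
  qed simp
  finally show ?thesis by simp
qed

lemma floor_half: "\<lfloor>x::real\<rfloor> = \<lfloor>2*x\<rfloor> div 2"
proof -
  define a where "a = \<lfloor>2*x\<rfloor>"
  have a: "of_int a \<le> 2*x" "2*x < of_int a + 1" unfolding a_def by linarith+
  have m: "a = 2*(a div 2) + a mod 2" "0 \<le> a mod 2" "a mod 2 \<le> 1" by auto
  have "real_of_int a = 2*real_of_int (a div 2) + real_of_int (a mod 2)"
    using m(1) by (metis of_int_add of_int_mult of_int_numeral)
  moreover have "0 \<le> real_of_int (a mod 2)" "real_of_int (a mod 2) \<le> 1" using m(2,3) by simp_all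
  ultimately have "real_of_int (a div 2) \<le> x \<and> x < real_of_int (a div 2) + 1" using a by linarith
  then show ?thesis unfolding a_def[symmetric] by (simp add: floor_eq_iff)
qed

lemma cell_nest:
  assumes "Y \<in> cell (Suc s) w'" "X \<in> cell (Suc s) w'" "X \<in> cell s w"
  shows "Y \<in> cell s w"
proof -
  have "\<lfloor>2^s * Y$i$j\<rfloor> = w$i$j" for i j
  proof -
    have "\<lfloor>2 * (2^s * Y$i$j)\<rfloor> = \<lfloor>2 * (2^s * X$i$j)\<rfloor>"
      using assms(1,2) by (simp add: cell_def mult.assoc)
    then have "\<lfloor>2^s * Y$i$j\<rfloor> = \<lfloor>2^s * X$i$j\<rfloor>" using floor_half by metis
    then show ?thesis using assms(3) by (simp add: cell_def)
  qed
  then show ?thesis by (simp add: cell_def)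
qed

lemma cell_Wset: "X \<in> hcube \<Longrightarrow> X \<in> cell s w \<Longrightarrow> w \<in> Wset s"
proof -
  assume "X \<in> hcube" "X \<in> cell s w"
  then obtain w' where "w' \<in> Wset s" "X \<in> cell s w'" using hcube_Union_cells[of s] by blast
  then show "w \<in> Wset s" using cells_disjoint[of w w' s] \<open>X \<in> cell s w\<close> by blast
qed

lemma cell_hcube: "w \<in> Wset s \<Longrightarrow> cell s w \<subseteq> hcube"
  using hcube_Union_cells[of s] by blast

lemma in_some_cell: "\<exists>w. (X :: real^'m^'n) \<in> cell s w"
  by (rule exI[of _ "\<chi> i j. \<lfloor>2^s * X$i$j\<rfloor>"]) (simp add: cell_def)

lemma dist_cell:
  assumes "X \<in> cell s w" "Y \<in> cell s w"
  shows "dist X (Y :: real^'m^'n) \<le> real (CARD('n) * CARD('m)) / 2^s"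
proof -
  have c: "\<bar>(X - Y)$i$j\<bar> \<le> 1/2^s" for i j
  proof -
    have "of_int (w$i$j) \<le> 2^s*X$i$j \<and> 2^s*X$i$j < of_int (w$i$j) + 1"
         "of_int (w$i$j) \<le> 2^s*Y$i$j \<and> 2^s*Y$i$j < of_int (w$i$j) + 1"
      using assms by (simp_all add: cell_def floor_eq_iff)
    moreover have "(X$i$j - Y$i$j) * 2^s = 2^s*X$i$j - 2^s*Y$i$j" by (simp add: algebra_simps)
    ultimately have "(X$i$j - Y$i$j) * 2^s \<le> 1" "-1 \<le> (X$i$j - Y$i$j) * 2^s"
      by linarith+
    then have "X$i$j - Y$i$j \<le> 1/2^s" "-(1/2^s) \<le> X$i$j - Y$i$j"
      by (simp_all add: field_simps)
    then show ?thesis by simp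
  qed
  have "dist X Y = norm (X - Y)" by (simp add: dist_norm)
  also have "\<dots> \<le> (\<Sum>i\<in>UNIV. norm ((X - Y)$i))" unfolding norm_vec_def by (rule L2_set_le_sum) simp
  also have "\<dots> \<le> (\<Sum>i\<in>UNIV. \<Sum>j\<in>UNIV. \<bar>(X - Y)$i$j\<bar>)"
    by (rule sum_mono) (metis norm_le_l1_cart real_norm_def)
  also have "\<dots> \<le> (\<Sum>i\<in>(UNIV::'n set). \<Sum>j\<in>(UNIV::'m set). 1/2^s)"
    by (intro sum_mono c)
  also have "\<dots> = real (CARD('n) * CARD('m)) / 2^s" by simp
  finally show ?thesis .
qed

lemma L0:
  fixes G :: "(real^'m^'n) set"
  assumes G: "G \<in> sets lebesgue" "G \<subseteq> hcube" and c: "0 \<le> c" "c < 1"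
    and le: "\<And>s w. w \<in> Wset s \<Longrightarrow> measure lebesgue (G \<inter> cell s w) \<le> c * measure lebesgue (cell s w)"
  shows "measure lebesgue G = 0"
proof (rule ccontr)
  assume ne: "measure lebesgue G \<noteq> 0"
  have Gl: "G \<in> lmeasurable" by (rule fmeasurableI2[OF hcube_lmeasurable G(2) G(1)])
  define \<mu> where "\<mu> = measure lebesgue G"
  have \<mu>pos: "0 < \<mu>" using ne measure_nonneg[of lebesgue G] unfolding \<mu>_def by linarith
  define \<delta> where "\<delta> = \<mu> * (1 - c) / 2"
  have \<delta>pos: "0 < \<delta>" using \<mu>pos c by (simp add: \<delta>_def)
  obtain U where U: "open U" "G \<subseteq> U" "(U - G) \<in> lmeasurable" "emeasure lebesgue (U - G) < ennreal \<delta>"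
    using sets_lebesgue_outer_open[OF G(1) \<delta>pos] by metis
  have UGm: "measure lebesgue (U - G) < \<delta>"
    using U(3,4) \<delta>pos by (simp add: emeasure_eq_measure2 ennreal_less_iff)
  have Ub: "U \<in> sets lebesgue"
    using U(1) by (simp add: sets_completionI_sets)
  have UH: "U \<inter> hcube \<in> lmeasurable"
    by (rule fmeasurableI2[OF hcube_lmeasurable]) (use Ub hcube_lmeasurable in auto)
  have measUH: "measure lebesgue (U \<inter> hcube) \<le> \<mu> + \<delta>"
  proof -
    have GU: "G \<union> (U - G) \<in> lmeasurable" by (rule fmeasurable.Un[OF Gl U(3)])
    have "measure lebesgue (U \<inter> hcube) \<le> measure lebesgue (G \<union> (U - G))"
      by (rule measure_mono_fmeasurable[OF _ _ GU]) (use UH in auto)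
    also have "\<dots> \<le> measure lebesgue G + measure lebesgue (U - G)"
      by (rule measure_Un_le) (use Gl U in auto)
    finally show ?thesis using UGm unfolding \<mu>_def by linarith
  qed
  define V where "V s = (\<Union>w\<in>{w\<in>Wset s. cell s w \<subseteq> U}. cell s w)" for s
  have finI: "finite {w\<in>Wset s. cell s w \<subseteq> U}" for s
    using finite_Wset[of s] by (rule finite_subset[rotated]) blast
  have GVm: "G \<inter> V s \<in> sets lebesgue" for s
  proof -
    have "G \<inter> V s = (\<Union>w\<in>{w\<in>Wset s. cell s w \<subseteq> U}. G \<inter> cell s w)" by (auto simp: V_def)
    also have "\<dots> \<in> sets lebesgue"
      using finI[of s] G(1) cell_lmeasurable by (intro sets.finite_UN) auto
    finally show ?thesis .
  qed
  have Vs: "measure lebesgue (G \<inter> V s) \<le> c * (\<mu> + \<delta>)" for s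
  proof -
    let ?I = "{w\<in>Wset s. cell s w \<subseteq> U}"
    have eq1: "G \<inter> V s = (\<Union>w\<in>?I. G \<inter> cell s w)" by (auto simp: V_def)
    have eq2: "hcube \<inter> V s = (\<Union>w\<in>?I. hcube \<inter> cell s w)" by (auto simp: V_def)
    have "measure lebesgue (G \<inter> V s) = (\<Sum>w\<in>?I. measure lebesgue (G \<inter> cell s w))"
      unfolding eq1 by (rule measure_split_cells[OF G]) auto
    also have "\<dots> \<le> (\<Sum>w\<in>?I. c * measure lebesgue (cell s w))" by (rule sum_mono) (auto intro: le)
    also have "\<dots> = c * (\<Sum>w\<in>?I. measure lebesgue (hcube \<inter> cell s w))"
      unfolding sum_distrib_left
    proof (rule sum.cong)
      fix w assume "w \<in> ?I"
      then have "hcube \<inter> cell s w = cell s w" using cell_hcube by blast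
      then show "c * measure lebesgue (cell s w) = c * measure lebesgue (hcube \<inter> cell s w)" by simp
    qed simp
    also have "\<dots> = c * measure lebesgue (hcube \<inter> V s)"
      unfolding eq2 by (subst measure_split_cells) (auto simp: hcube_borel)
    also have "\<dots> \<le> c * measure lebesgue (U \<inter> hcube)"
    proof (rule mult_left_mono[OF _ c(1)], rule measure_mono_fmeasurable[OF _ _ UH])
      show "hcube \<inter> V s \<subseteq> U \<inter> hcube" by (auto simp: V_def)
      show "hcube \<inter> V s \<in> sets lebesgue"
        unfolding eq2 using finI[of s] cell_lmeasurable hcube_lmeasurable by (intro sets.finite_UN) auto
    qed
    also have "\<dots> \<le> c * (\<mu> + \<delta>)" by (rule mult_left_mono[OF measUH c(1)])
    finally show ?thesis .
  qed
  have cover: "G \<subseteq> (\<Union>s. G \<inter> V s)"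
  proof
    fix X assume XG: "X \<in> G"
    then have XH: "X \<in> hcube" using G by auto
    obtain r where r: "r > 0" "ball X r \<subseteq> U" using U(1,2) XG by (meson openE subsetD)
    obtain s where s: "real (CARD('n) * CARD('m)) / r < 2^s" using real_arch_pow[of 2] by auto
    obtain w where w: "X \<in> cell s w" using in_some_cell by blast
    have "cell s w \<subseteq> U"
    proof
      fix Y assume "Y \<in> cell s w"
      then have "dist X Y \<le> real (CARD('n) * CARD('m)) / 2^s" using dist_cell w by blast
      also have "\<dots> < r" using s r by (simp add: field_simps)
      finally show "Y \<in> U" using r by auto
    qed
    then have "X \<in> V s" using w cell_Wset[OF XH w] by (auto simp: V_def)
    then show "X \<in> (\<Union>s. G \<inter> V s)" using XG by blast
  qed
  have inc: "incseq (\<lambda>s. G \<inter> V s)"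
  proof (rule incseq_SucI)
    fix s
    show "G \<inter> V s \<subseteq> G \<inter> V (Suc s)"
    proof
      fix X assume "X \<in> G \<inter> V s"
      then obtain w where XG: "X \<in> G" and w: "w \<in> Wset s" "cell s w \<subseteq> U" "X \<in> cell s w"
        by (auto simp: V_def)
      obtain w' where w': "X \<in> cell (Suc s) w'" using in_some_cell by blast
      have "cell (Suc s) w' \<subseteq> cell s w" using cell_nest w' w(3) by blast
      moreover have "w' \<in> Wset (Suc s)" using cell_Wset w' w cell_hcube by blast
      ultimately show "X \<in> G \<inter> V (Suc s)" using XG w w' by (auto simp: V_def)
    qed
  qed
  have "emeasure lebesgue G = emeasure lebesgue (\<Union>s. G \<inter> V s)"
    using cover by (intro arg_cong[where f="emeasure lebesgue"]) blast
  also have "\<dots> = (SUP s. emeasure lebesgue (G \<inter> V s))"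
    by (rule SUP_emeasure_incseq[symmetric]) (use GVm inc in auto)
  also have "\<dots> \<le> ennreal (c * (\<mu> + \<delta>))"
  proof (rule SUP_least)
    fix s
    have "G \<inter> V s \<in> lmeasurable" by (rule fmeasurableI2[OF Gl]) (use GVm in auto)
    then have "emeasure lebesgue (G \<inter> V s) = ennreal (measure lebesgue (G \<inter> V s))"
      by (simp add: emeasure_eq_measure2)
    then show "emeasure lebesgue (G \<inter> V s) \<le> ennreal (c * (\<mu> + \<delta>))"
      using Vs[of s] by (simp add: ennreal_leI)
  qed
  finally have "ennreal \<mu> \<le> ennreal (c * (\<mu> + \<delta>))"
    using Gl unfolding \<mu>_def by (simp add: emeasure_eq_measure2)
  then have h: "\<mu> \<le> c * (\<mu> + \<delta>)" using c \<mu>pos \<delta>pos by (simp add: ennreal_le_iff)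
  define a where "a = \<mu> * (1 - c)"
  have apos: "0 < a" using \<mu>pos c by (simp add: a_def)
  have e1: "c * \<delta> = c * a / 2" by (simp add: a_def \<delta>_def)
  have e2: "a = \<mu> - c * \<mu>" by (simp add: a_def algebra_simps)
  have e3: "c * (\<mu> + \<delta>) = c * \<mu> + c * \<delta>" by (simp add: algebra_simps)
  have "a \<le> c * a / 2" using h e1 e2 e3 by linarith
  then have "a * (1 - c/2) \<le> 0" by (simp add: algebra_simps)
  moreover have "0 < a * (1 - c/2)" using apos c by simp
  ultimately show False by linarith
qed

lemma vfrac_hcube: "X \<in> hcube \<Longrightarrow> vfrac X = X"
  by (simp add: hcube_def vfrac_def vec_eq_iff frac_eq)

lemma vfrac_in_hcube: "vfrac X \<in> hcube"
  by (simp add: hcube_def vfrac_def frac_lt_1)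

lemma ofv_nth[simp]: "ofv w $ i $ j = real_of_int (w$i$j)"
  by (simp add: ofv_def)

lemma cell_shift:
  assumes "X \<in> cell s z"
  shows "X + (1/2^s) *\<^sub>R ofv (w - z) \<in> cell s w"
proof -
  have "\<lfloor>2^s * (X + (1/2^s) *\<^sub>R ofv (w - z))$i$j\<rfloor> = w$i$j" for i j
  proof -
    have "2^s * (X + (1/2^s) *\<^sub>R ofv (w - z))$i$j = 2^s * X$i$j + of_int (w$i$j - z$i$j)"
      by (simp add: algebra_simps)
    then have "\<lfloor>2^s * (X + (1/2^s) *\<^sub>R ofv (w - z))$i$j\<rfloor> = \<lfloor>2^s * X$i$j\<rfloor> + (w$i$j - z$i$j)"
      by simp
    then show ?thesis using assms by (simp add: cell_def)
  qed
  then show ?thesis by (simp add: cell_def)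
qed

lemma L1:
  fixes G :: "(real^'m^'n) set"
  assumes G: "G \<in> sets lebesgue" "G \<subseteq> hcube"
    and inv: "\<And>X s W. X \<in> G \<Longrightarrow> vfrac (X + (1/2^s) *\<^sub>R ofv W) \<in> G"
  shows "measure lebesgue G = 0 \<or> measure lebesgue G = 1"
proof -
  have Gl: "G \<in> lmeasurable" by (rule fmeasurableI2[OF hcube_lmeasurable G(2) G(1)])
  have GC: "G \<inter> cell s w \<in> lmeasurable" for s w
    by (rule fmeasurableI2[OF Gl]) (use G cell_lmeasurable[of s w] in \<open>auto intro!: sets.Int dest: fmeasurableD\<close>)
  define \<mu> where "\<mu> = measure lebesgue G"
  have mono: "measure lebesgue (G \<inter> cell s z) \<le> measure lebesgue (G \<inter> cell s w)"
    if w: "w \<in> Wset s" and z: "z \<in> Wset s" for s w z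
  proof -
    let ?a = "(1/2^s) *\<^sub>R ofv (w - z)"
    have sub: "(\<lambda>X. ?a + X) ` (G \<inter> cell s z) \<subseteq> G \<inter> cell s w"
    proof
      fix Y assume "Y \<in> (\<lambda>X. ?a + X) ` (G \<inter> cell s z)"
      then obtain X where X: "X \<in> G" "X \<in> cell s z" and Y: "Y = X + ?a" by (auto simp: add.commute)
      have Yc: "Y \<in> cell s w" using cell_shift[OF X(2), of w] Y by simp
      then have "Y \<in> hcube" using cell_hcube[OF w] by blast
      then have "vfrac Y = Y" by (rule vfrac_hcube)
      moreover have "vfrac Y \<in> G" using inv[OF X(1), of s "w - z"] Y by simp
      ultimately show "Y \<in> G \<inter> cell s w" using Yc by simp
    qed
    have "measure lebesgue (G \<inter> cell s z) = measure lebesgue ((\<lambda>X. ?a + X) ` (G \<inter> cell s z))"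
      using measure_translation[of ?a "G \<inter> cell s z"] by simp
    also have "\<dots> \<le> measure lebesgue (G \<inter> cell s w)"
      by (rule measure_mono_fmeasurable[OF sub _ GC]) (use GC in \<open>auto intro: lebesgue_sets_translation\<close>)
    finally show ?thesis .
  qed
  have eqz: "measure lebesgue (G \<inter> cell s z) = \<mu> * measure lebesgue (cell s z)" if z: "z \<in> Wset s" for s z
  proof -
    have "\<mu> = (\<Sum>w\<in>Wset s. measure lebesgue (G \<inter> cell s w))"
      unfolding \<mu>_def by (rule measure_sum_cells[OF G])
    also have "\<dots> = (\<Sum>w\<in>(Wset s :: (int^'m^'n) set). measure lebesgue (G \<inter> cell s z))"
    proof (rule sum.cong)
      fix w :: "int^'m^'n" assume "w \<in> Wset s"
      then show "measure lebesgue (G \<inter> cell s w) = measure lebesgue (G \<inter> cell s z)"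
        using mono[of w s z] mono[of z s w] z by linarith
    qed simp
    also have "\<dots> = real (card (Wset s :: (int^'m^'n) set)) * measure lebesgue (G \<inter> cell s z)" by simp
    finally have h: "\<mu> = real (card (Wset s :: (int^'m^'n) set)) * measure lebesgue (G \<inter> cell s z)" .
    have "measure lebesgue (G \<inter> cell s z) = measure lebesgue (G \<inter> cell s z) * (real (card (Wset s :: (int^'m^'n) set)) * (1/2^s)^DIM(real^'m^'n))"
      using card_Wset_measure[of s, where 'm='m and 'n='n] by simp
    also have "\<dots> = \<mu> * (1/2^s)^DIM(real^'m^'n)" using h by (simp add: algebra_simps)
    finally show ?thesis by (simp add: measure_cell)
  qed
  have le1: "\<mu> \<le> 1"
    unfolding \<mu>_def using measure_mono_fmeasurable[OF G(2) G(1) hcube_lmeasurable] measure_hcube[where 'm='m and 'n='n] by linarith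
  show ?thesis
  proof (cases "\<mu> = 1")
    case False
    then have "\<mu> < 1" using le1 by simp
    then have "measure lebesgue G = 0"
      by (intro L0[OF G, of \<mu>]) (auto simp: \<mu>_def eqz)
    then show ?thesis by simp
  qed (simp add: \<mu>_def)
qed

lemma frac_inj_aux:
  assumes "frac x = frac (y::real)" "\<bar>x - y\<bar> < 1"
  shows "x = y"
proof -
  have "x - y = of_int (\<lfloor>x\<rfloor> - \<lfloor>y\<rfloor>)" using assms(1) by (simp add: frac_def)
  then have "\<bar>of_int (\<lfloor>x\<rfloor> - \<lfloor>y\<rfloor>) :: real\<bar> < 1" using assms(2) by simp
  then have "\<lfloor>x\<rfloor> - \<lfloor>y\<rfloor> = 0" by linarith
  then show ?thesis using \<open>x - y = _\<close> by simp
qed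

lemma vfrac_eq: "vfrac X = X - ofv (vfloor X)"
  by (simp add: vfrac_def vfloor_def vec_eq_iff frac_def)

lemma sets_lebesgue_affine_image:
  fixes S :: "'a::euclidean_space set"
  assumes S: "S \<in> sets lebesgue" and r: "r \<noteq> 0"
  shows "(\<lambda>x. r *\<^sub>R x + d) ` S \<in> sets lebesgue"
proof -
  have "(\<lambda>x. r *\<^sub>R x) ` S = (\<lambda>x. (1/r) *\<^sub>R x) -` S \<inter> space lebesgue"
    using r by (force simp: image_iff)
  also have "\<dots> \<in> sets lebesgue"
    by (rule measurable_sets[OF lebesgue_measurable_scaling S])
  finally have *: "(\<lambda>x. r *\<^sub>R x) ` S \<in> sets lebesgue" .
  have "(\<lambda>x. r *\<^sub>R x + d) ` S = (\<lambda>x. d + x) ` ((\<lambda>x. r *\<^sub>R x) ` S)"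
    by (auto simp: image_image add.commute)
  then show ?thesis using lebesgue_sets_translation[OF *] by simp
qed

lemma finite_Zb: "finite {z :: int^'m^'n. \<forall>i j. z$i$j = \<lfloor>(b :: real^'m^'n)$i$j\<rfloor> \<or> z$i$j = \<lfloor>b$i$j\<rfloor> + 1}"
proof -
  let ?S = "(\<lambda>(i,j). \<lfloor>(b :: real^'m^'n)$i$j\<rfloor>) ` (UNIV :: ('n \<times> 'm) set) \<union> (\<lambda>(i,j). \<lfloor>b$i$j\<rfloor> + 1) ` UNIV"
  have "{z :: int^'m^'n. \<forall>i j. z$i$j = \<lfloor>b$i$j\<rfloor> \<or> z$i$j = \<lfloor>b$i$j\<rfloor> + 1} \<subseteq> {z. \<forall>i j. z$i$j \<in> ?S}"
  proof (intro subsetI CollectI allI)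
    fix z :: "int^'m^'n" and i j
    assume "z \<in> {z :: int^'m^'n. \<forall>i j. z$i$j = \<lfloor>b$i$j\<rfloor> \<or> z$i$j = \<lfloor>b$i$j\<rfloor> + 1}"
    then have "z$i$j = (\<lambda>(i,j). \<lfloor>b$i$j\<rfloor>) (i,j) \<or> z$i$j = (\<lambda>(i,j). \<lfloor>b$i$j\<rfloor> + 1) (i,j)" by simp
    then show "z$i$j \<in> ?S" by blast
  qed
  moreover have "finite {z :: int^'m^'n. \<forall>i j. z$i$j \<in> ?S}" by (rule finite_vec2_set) simp
  ultimately show ?thesis by (rule finite_subset)
qed

lemma frac_measure:
  fixes A :: "(real^'m^'n) set" and b :: "real^'m^'n"
  assumes A: "A \<in> sets lebesgue" "A \<subseteq> (\<lambda>Y. b + Y) ` hcube"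
  shows "vfrac ` A \<in> sets lebesgue \<and> measure lebesgue (vfrac ` A) = measure lebesgue A"
proof -
  define Zb where "Zb = {z :: int^'m^'n. \<forall>i j. z$i$j = \<lfloor>b$i$j\<rfloor> \<or> z$i$j = \<lfloor>b$i$j\<rfloor> + 1}"
  have finZ: "finite Zb" unfolding Zb_def by (rule finite_Zb)
  define Az where "Az z = A \<inter> {X. vfloor X = z}" for z
  have bnd: "b$i$j \<le> X$i$j \<and> X$i$j < b$i$j + 1" if "X \<in> A" for X i j
  proof -
    obtain Y where "Y \<in> hcube" "X = b + Y" using A(2) \<open>X \<in> A\<close> by blast
    then show ?thesis by (auto simp: hcube_def)
  qed
  have inZ: "vfloor X \<in> Zb" if "X \<in> A" for X
  proof -
    have "\<lfloor>X$i$j\<rfloor> = \<lfloor>b$i$j\<rfloor> \<or> \<lfloor>X$i$j\<rfloor> = \<lfloor>b$i$j\<rfloor> + 1" for i j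
    proof -
      have "\<lfloor>b$i$j\<rfloor> \<le> \<lfloor>X$i$j\<rfloor>" using bnd[OF that, of i j] by (simp add: floor_mono)
      moreover have "\<lfloor>X$i$j\<rfloor> \<le> \<lfloor>b$i$j\<rfloor> + 1" using bnd[OF that, of i j] by linarith
      ultimately show ?thesis by linarith
    qed
    then show ?thesis by (simp add: Zb_def vfloor_def)
  qed
  have inj: "inj_on vfrac A"
  proof (rule inj_onI)
    fix X X' assume X: "X \<in> A" "X' \<in> A" "vfrac X = vfrac X'"
    show "X = X'"
    proof (rule vec_eq_iff[THEN iffD2], intro allI, rule vec_eq_iff[THEN iffD2], intro allI)
      fix i j
      have "frac (X$i$j) = frac (X'$i$j)" using X(3) by (simp add: vfrac_def vec_eq_iff)
      moreover have "\<bar>X$i$j - X'$i$j\<bar> < 1" using bnd[OF X(1), of i j] bnd[OF X(2), of i j] by linarith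
      ultimately show "X$i$j = X'$i$j" by (rule frac_inj_aux)
    qed
  qed
  have Azm: "Az z \<in> sets lebesgue" for z
  proof -
    have "{X :: real^'m^'n. vfloor X = z} = {X. \<forall>i j. \<lfloor>X$i$j\<rfloor> = z$i$j}"
      by (auto simp: vfloor_def vec_eq_iff)
    also have "\<dots> \<in> sets borel" by measurable
    finally have "{X :: real^'m^'n. vfloor X = z} \<in> sets lebesgue" by (simp add: sets_completionI_sets)
    then show ?thesis unfolding Az_def using A(1) by simp
  qed
  have Al: "A \<in> lmeasurable"
    by (rule fmeasurableI2[OF measurable_translation[OF hcube_lmeasurable, of b] A(2) A(1)])
  have Azl: "Az z \<in> lmeasurable" for z
    by (rule fmeasurableI2[OF Al]) (use Azm in \<open>auto simp: Az_def\<close>)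
  have img: "vfrac ` Az z = (\<lambda>X. - ofv z + X) ` Az z" for z
    by (rule image_cong[OF refl]) (simp add: Az_def vfrac_eq)
  have imgl: "vfrac ` Az z \<in> lmeasurable" for z
    unfolding img by (rule measurable_translation[OF Azl])
  have imgm: "measure lebesgue (vfrac ` Az z) = measure lebesgue (Az z)" for z
    unfolding img by (rule measure_translation)
  have Aeq: "A = (\<Union>z\<in>Zb. Az z)" using inZ by (auto simp: Az_def)
  then have Feq: "vfrac ` A = (\<Union>z\<in>Zb. vfrac ` Az z)" by auto
  have "vfrac ` A \<in> sets lebesgue"
    unfolding Feq using finZ imgl by (intro sets.finite_UN) auto
  moreover have "measure lebesgue (vfrac ` A) = measure lebesgue A"
  proof -
    have "measure lebesgue (vfrac ` A) = (\<Sum>z\<in>Zb. measure lebesgue (vfrac ` Az z))"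
      unfolding Feq
    proof (rule measure_negligible_finite_Union_image[OF finZ imgl])
      show "pairwise (\<lambda>x y. negligible (vfrac ` Az x \<inter> vfrac ` Az y)) Zb"
        unfolding pairwise_def
      proof (intro ballI impI)
        fix x y :: "int^'m^'n" assume "x \<noteq> y"
        have "vfrac ` Az x \<inter> vfrac ` Az y = {}"
        proof (rule ccontr)
          assume "vfrac ` Az x \<inter> vfrac ` Az y \<noteq> {}"
          then obtain X Y where "X \<in> Az x" "Y \<in> Az y" "vfrac X = vfrac Y" by blast
          then have "X = Y" using inj by (auto simp: Az_def inj_on_def)
          then show False using \<open>X \<in> Az x\<close> \<open>Y \<in> Az y\<close> \<open>x \<noteq> y\<close> by (auto simp: Az_def)
        qed
        then show "negligible (vfrac ` Az x \<inter> vfrac ` Az y)" by simp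
      qed
    qed
    also have "\<dots> = (\<Sum>z\<in>Zb. measure lebesgue (Az z))" by (simp add: imgm)
    also have "\<dots> = measure lebesgue (\<Union>z\<in>Zb. Az z)"
    proof (rule measure_negligible_finite_Union_image[symmetric, OF finZ Azl])
      show "pairwise (\<lambda>x y. negligible (Az x \<inter> Az y)) Zb"
        unfolding pairwise_def
      proof (intro ballI impI)
        fix x y :: "int^'m^'n" assume "x \<noteq> y"
        then have "Az x \<inter> Az y = {}" by (auto simp: Az_def)
        then show "negligible (Az x \<inter> Az y)" by simp
      qed
    qed
    finally show ?thesis using Aeq by simp
  qed
  ultimately show ?thesis by simp
qed

lemma vfrac_double: "vfrac (2 *\<^sub>R vfrac V + c) = vfrac (2 *\<^sub>R V + c)"
proof -
  have "frac (2 * frac x + y) = frac (2 * x + y)" for x y :: real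
  proof -
    have "2 * frac x + y = (2 * x + y) + of_int (- 2 * \<lfloor>x\<rfloor>)" by (simp add: frac_def algebra_simps)
    then show ?thesis by (simp only: frac_add_of_int_right)
  qed
  then show ?thesis by (simp add: vfrac_def vec_eq_iff)
qed

lemma iterate_inv:
  assumes G: "G \<subseteq> hcube" and inv: "\<And>X. X \<in> G \<Longrightarrow> vfrac (2 *\<^sub>R X + c) \<in> G"
  shows "X \<in> G \<Longrightarrow> vfrac ((2^s) *\<^sub>R X + (2^s - 1) *\<^sub>R c) \<in> G"
proof (induction s)
  case 0
  then have "X \<in> hcube" using G by blast
  then have "vfrac X = X" by (rule vfrac_hcube)
  then show ?case using 0 by simp
next
  case (Suc s)
  then have "vfrac (2 *\<^sub>R vfrac ((2^s) *\<^sub>R X + (2^s - 1) *\<^sub>R c) + c) \<in> G" using inv by blast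
  also have "vfrac (2 *\<^sub>R vfrac ((2^s) *\<^sub>R X + (2^s - 1) *\<^sub>R c) + c) = vfrac ((2^Suc s) *\<^sub>R X + (2^Suc s - 1) *\<^sub>R c)"
  proof -
    have eq: "2 *\<^sub>R ((2^s) *\<^sub>R X + (2^s - 1) *\<^sub>R c) + c = (2^Suc s) *\<^sub>R X + (2^Suc s - 1) *\<^sub>R c"
      by (simp add: vec_eq_iff algebra_simps)
    show ?thesis by (simp only: vfrac_double eq)
  qed
  finally show ?case .
qed

lemma L2:
  fixes G :: "(real^'m^'n) set"
  assumes G: "G \<in> sets lebesgue" "G \<subseteq> hcube"
    and inv: "\<And>X. X \<in> G \<Longrightarrow> vfrac (2 *\<^sub>R X + c) \<in> G"
  shows "measure lebesgue G = 0 \<or> measure lebesgue G = 1"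
proof (rule ccontr)
  assume ne: "\<not> (measure lebesgue G = 0 \<or> measure lebesgue G = 1)"
  have Gl: "G \<in> lmeasurable" by (rule fmeasurableI2[OF hcube_lmeasurable G(2) G(1)])
  define \<mu> where "\<mu> = measure lebesgue G"
  have le1: "\<mu> \<le> 1"
    unfolding \<mu>_def using measure_mono_fmeasurable[OF G(2) G(1) hcube_lmeasurable] measure_hcube[where 'm='m and 'n='n] by linarith
  have \<mu>: "0 \<le> \<mu>" "\<mu> < 1" "\<mu> \<noteq> 0" using ne le1 measure_nonneg[of lebesgue G] by (auto simp: \<mu>_def)
  obtain s w where w: "w \<in> Wset s" and big: "measure lebesgue (G \<inter> cell s w) > \<mu> * measure lebesgue (cell s w)"
  proof -
    have "\<not> (\<forall>s w. w \<in> Wset s \<longrightarrow> measure lebesgue (G \<inter> cell s w) \<le> \<mu> * measure lebesgue (cell s w))"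
      using L0[OF G \<mu>(1,2)] \<mu>(3) unfolding \<mu>_def by blast
    then show ?thesis using that by (meson not_le)
  qed
  define A where "A = G \<inter> cell s w"
  define \<sigma> where "\<sigma> X = (2^s) *\<^sub>R X + (2^s - 1) *\<^sub>R c" for X :: "real^'m^'n"
  define b where "b = ofv w + (2^s - 1) *\<^sub>R c"
  have Am: "A \<in> sets lebesgue" unfolding A_def using G(1) cell_lmeasurable[of s w] by (auto dest: fmeasurableD)
  have sA: "\<sigma> ` A \<in> sets lebesgue"
    unfolding \<sigma>_def by (rule sets_lebesgue_affine_image[OF Am]) simp
  have sub: "\<sigma> ` A \<subseteq> (\<lambda>Y. b + Y) ` hcube"
  proof
    fix Z assume "Z \<in> \<sigma> ` A"
    then obtain X where X: "X \<in> cell s w" "Z = \<sigma> X" by (auto simp: A_def)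
    then obtain Y where Y: "Y \<in> hcube" "X = (1/2^s) *\<^sub>R Y + (1/2^s) *\<^sub>R ofv w" unfolding cell_image by blast
    have "Z = b + Y" using X(2) Y(2) by (simp add: \<sigma>_def b_def algebra_simps)
    then show "Z \<in> (\<lambda>Y. b + Y) ` hcube" using Y(1) by blast
  qed
  have fr: "vfrac ` \<sigma> ` A \<in> sets lebesgue \<and> measure lebesgue (vfrac ` \<sigma> ` A) = measure lebesgue (\<sigma> ` A)"
    by (rule frac_measure[OF sA sub])
  have subG: "vfrac ` \<sigma> ` A \<subseteq> G"
    using iterate_inv[OF G(2) inv] by (auto simp: A_def \<sigma>_def)
  have "measure lebesgue (\<sigma> ` A) = \<bar>2^s\<bar> ^ DIM(real^'m^'n) * measure lebesgue A"
    unfolding \<sigma>_def by (rule measure_lebesgue_affine)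
  also have "\<dots> > (2^s) ^ DIM(real^'m^'n) * (\<mu> * (1/2^s)^DIM(real^'m^'n))"
    using big by (simp add: A_def measure_cell)
  also have "(2^s) ^ DIM(real^'m^'n) * (\<mu> * (1/2^s)^DIM(real^'m^'n)) = (\<mu> :: real)"
    by (simp add: power_one_over field_simps)
  finally have "\<mu> < measure lebesgue (vfrac ` \<sigma> ` A)" using fr by simp
  also have "\<dots> \<le> \<mu>"
    unfolding \<mu>_def by (rule measure_mono_fmeasurable[OF subG _ Gl]) (use fr in auto)
  finally show False by simp
qed




lemma Gcd_eq_1_iff_prime:
  fixes S :: "int set"
  assumes nz: "\<exists>x\<in>S. x \<noteq> 0"
  shows "Gcd S = 1 \<longleftrightarrow> (\<forall>d. prime d \<longrightarrow> \<not> (\<forall>x\<in>S. d dvd x))"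
proof
  assume g: "Gcd S = 1"
  show "\<forall>d. prime d \<longrightarrow> \<not> (\<forall>x\<in>S. d dvd x)"
  proof (intro allI impI notI)
    fix d :: int assume d: "prime d" "\<forall>x\<in>S. d dvd x"
    then have "d dvd Gcd S" by (simp add: Gcd_greatest)
    then have "is_unit d" using g by simp
    then show False using d(1) by (simp add: not_prime_unit)
  qed
next
  assume h: "\<forall>d. prime d \<longrightarrow> \<not> (\<forall>x\<in>S. d dvd x)"
  have ne: "Gcd S \<noteq> 0" using nz by (auto simp: Gcd_0_iff)
  have "is_unit (Gcd S)"
  proof (rule ccontr)
    assume "\<not> is_unit (Gcd S)"
    then obtain d where d: "d dvd Gcd S" "prime d" using prime_divisor_exists[OF ne] by blast
    then have "\<forall>x\<in>S. d dvd x" using Gcd_dvd dvd_trans by blast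
    then show False using h d(2) by blast
  qed
  then have "normalize (Gcd S) = 1" by (simp add: is_unit_normalize)
  then show "Gcd S = 1" by simp
qed

lemma adm_transfer:
  fixes p p' :: "int^'m" and q :: "int^'n"
  assumes adm: "admissible v p q" and q: "q \<noteq> 0"
    and tr: "\<And>d j. prime d \<Longrightarrow> (\<forall>r. d dvd q$r) \<Longrightarrow> d dvd p'$j \<Longrightarrow> d dvd p$j"
  shows "admissible v p' q"
proof -
  obtain r where r: "q$r \<noteq> 0" using q by (auto simp: vec_eq_iff)
  show ?thesis
  proof (cases v)
    case Plain then show ?thesis by (simp add: admissible_def)
  next
    case Coprime
    let ?S = "range (\<lambda>j. p $ j) \<union> range (\<lambda>i. q $ i)"
    let ?S' = "range (\<lambda>j. p' $ j) \<union> range (\<lambda>i. q $ i)"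
    have nzS: "\<exists>x\<in>?S. x \<noteq> 0" "\<exists>x\<in>?S'. x \<noteq> 0" using r by auto
    have g: "Gcd ?S = 1" using adm Coprime by (simp add: admissible_def)
    have "\<forall>d. prime d \<longrightarrow> \<not> (\<forall>x\<in>?S'. d dvd x)"
    proof (intro allI impI notI)
      fix d :: int assume d: "prime d" "\<forall>x\<in>?S'. d dvd x"
      then have "\<forall>x\<in>?S. d dvd x" using tr[OF d(1)] by auto
      then show False using g d(1) Gcd_eq_1_iff_prime[OF nzS(1)] by blast
    qed
    then show ?thesis using Coprime Gcd_eq_1_iff_prime[OF nzS(2)] by (simp add: admissible_def)
  next
    case CoprimeEach
    have "Gcd (insert (p' $ j) (range (\<lambda>i. q $ i))) = 1" for j
    proof -
      let ?S = "insert (p $ j) (range (\<lambda>i. q $ i))"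
      let ?S' = "insert (p' $ j) (range (\<lambda>i. q $ i))"
      have nzS: "\<exists>x\<in>?S. x \<noteq> 0" "\<exists>x\<in>?S'. x \<noteq> 0" using r by auto
      have g: "Gcd ?S = 1" using adm CoprimeEach by (simp add: admissible_def)
      have "\<forall>d. prime d \<longrightarrow> \<not> (\<forall>x\<in>?S'. d dvd x)"
      proof (intro allI impI notI)
        fix d :: int assume d: "prime d" "\<forall>x\<in>?S'. d dvd x"
        then have "\<forall>x\<in>?S. d dvd x" using tr[OF d(1)] by auto
        then show False using g d(1) Gcd_eq_1_iff_prime[OF nzS(1)] by blast
      qed
      then show ?thesis using Gcd_eq_1_iff_prime[OF nzS(2)] by blast
    qed
    then show ?thesis using CoprimeEach by (simp add: admissible_def)
  qed
qed

lemma prime_dvd_pow2: "prime (d::int) \<Longrightarrow> d dvd 2^t \<Longrightarrow> d = 2"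
proof -
  assume d: "prime d" "d dvd 2^t"
  then have "d dvd 2" using prime_dvd_power by blast
  moreover have "d \<ge> 2" using d(1) prime_ge_2_int by blast
  ultimately show "d = 2" using zdvd_imp_le[of d 2] by simp
qed

lemma prime_dvd_div_pow2:
  fixes d x :: int
  assumes d: "prime d" "d \<noteq> 2" and dx: "d dvd x" and px: "2^t dvd x"
  shows "d dvd x div 2^t"
proof -
  have "x = 2^t * (x div 2^t)" using px by simp
  then have "d dvd 2^t * (x div 2^t)" using dx by metis
  then have "d dvd 2^t \<or> d dvd x div 2^t" using d(1) prime_dvd_mult_iff by blast
  then show ?thesis using prime_dvd_pow2 d by blast
qed

lemma NT1:
  fixes p :: "int^'m" and q :: "int^'n" and Z :: "int^'m^'n"
  assumes t: "\<forall>r. 2^t dvd q$r" "\<not> 2^(t+1) dvd q$i"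
    and d: "prime d" "\<forall>r. d dvd q$r"
    and dv: "d dvd 2 * p$j - q$i div 2^t + (\<Sum>r\<in>UNIV. q$r * Z$r$j)"
  shows "d dvd p$j"
proof -
  have s: "d dvd (\<Sum>r\<in>UNIV. q$r * Z$r$j)" using d(2) by (intro dvd_sum) simp
  have h: "d dvd 2 * p$j - q$i div 2^t"
  proof -
    have "d dvd (2 * p$j - q$i div 2^t + (\<Sum>r\<in>UNIV. q$r * Z$r$j)) - (\<Sum>r\<in>UNIV. q$r * Z$r$j)"
      using dv s by (rule dvd_diff)
    then show ?thesis by simp
  qed
  have odd: "\<not> 2 dvd q$i div 2^t"
  proof
    assume "2 dvd q$i div 2^t"
    then obtain k where "q$i div 2^t = 2*k" by blast
    moreover have "q$i = 2^t * (q$i div 2^t)" using t(1) by simp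
    ultimately have "q$i = 2^(t+1) * k" by simp
    then show False using t(2) by simp
  qed
  show ?thesis
  proof (cases "d = 2")
    case True
    then have "2 dvd 2 * p$j - q$i div 2^t" using h by simp
    moreover have "2 dvd 2 * p$j" by simp
    ultimately have "2 dvd 2 * p$j - (2 * p$j - q$i div 2^t)" by (rule dvd_diff[rotated])
    then have "2 dvd q$i div 2^t" by simp
    then show ?thesis using odd by simp
  next
    case False
    have "d dvd q$i div 2^t" by (rule prime_dvd_div_pow2[OF d(1) False]) (use d t in auto)
    then have "d dvd (2 * p$j - q$i div 2^t) + q$i div 2^t" using h by (intro dvd_add)
    then have "d dvd 2 * p$j" by simp
    then have "d dvd 2 \<or> d dvd p$j" using d(1) prime_dvd_mult_iff by blast
    moreover have "\<not> d dvd 2" using prime_dvd_pow2[OF d(1), of 1] False by auto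
    ultimately show ?thesis by blast
  qed
qed

lemma NT2:
  fixes p :: "int^'m" and q :: "int^'n" and Z W :: "int^'m^'n"
  assumes t: "\<forall>r. 2^(s+1) dvd q$r"
    and d: "prime d" "\<forall>r. d dvd q$r"
    and dv: "d dvd p$j - (\<Sum>r\<in>UNIV. (q$r div 2^s) * W$r$j) + (\<Sum>r\<in>UNIV. q$r * Z$r$j)"
  shows "d dvd p$j"
proof -
  have qd: "d dvd q$r div 2^s" for r
  proof (cases "d = 2")
    case True
    obtain k where "q$r = 2^(s+1) * k" using t by blast
    then have "q$r div 2^s = 2 * k" by simp
    then show ?thesis using True by simp
  next
    case False
    have "2^s dvd q$r"
    proof -
      have "(2::int)^s dvd 2^(s+1)" by (rule le_imp_power_dvd) simp
      then show ?thesis using t dvd_trans by blast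
    qed
    then show ?thesis by (rule prime_dvd_div_pow2[OF d(1) False d(2)[rule_format]])
  qed
  have s1: "d dvd (\<Sum>r\<in>UNIV. (q$r div 2^s) * W$r$j)" using qd by (intro dvd_sum) simp
  have s2: "d dvd (\<Sum>r\<in>UNIV. q$r * Z$r$j)" using d(2) by (intro dvd_sum) simp
  let ?A = "\<Sum>r\<in>UNIV. (q$r div 2^s) * W$r$j" and ?B = "\<Sum>r\<in>UNIV. q$r * Z$r$j"
  have "p$j = (p$j - ?A + ?B) + ?A - ?B" by simp
  moreover have "d dvd (p$j - ?A + ?B) + ?A - ?B" by (rule dvd_diff[OF dvd_add[OF dv s1] s2])
  ultimately show ?thesis by simp
qed

lemma sup_norm_less: "sup_norm (v :: real^'m) < r \<longleftrightarrow> (\<forall>j. \<bar>v$j\<bar> < r)"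
  unfolding sup_norm_def by (subst Max_less_iff) auto

definition sols :: "variant \<Rightarrow> (int^'n \<Rightarrow> real) \<Rightarrow> nat \<Rightarrow> (int^'n \<Rightarrow> bool) \<Rightarrow> real^'m^'n \<Rightarrow> ((int^'m) \<times> (int^'n)) set" where
  "sols v \<Psi> k P X = {(p, q). q \<noteq> 0 \<and> admissible v p q \<and> P q \<and>
      sup_norm (row_times q X + (\<chi> j. real_of_int (p $ j))) < real k * \<Psi> q}"

lemma approx_set_sols: "approx_set v (\<lambda>q. real k * \<Psi> q) = {X \<in> unit_cube. infinite (sols v \<Psi> k (\<lambda>_. True) X)}"
  by (simp add: approx_set_def sols_def)

lemma sols_mono: "(\<And>q. P q \<Longrightarrow> P' q) \<Longrightarrow> sols v \<Psi> k P X \<subseteq> sols v \<Psi> k P' X"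
  by (auto simp: sols_def)

lemma affine_identity:
  fixes a :: int and C X :: "real^'m^'n" and q :: "int^'n" and p :: "int^'m"
  assumes e: "\<And>j. (\<Sum>i\<in>UNIV. real_of_int (q$i) * C$i$j) = real_of_int (E j)"
  defines "Z \<equiv> vfloor (of_int a *\<^sub>R X + C)"
  defines "p' \<equiv> (\<chi> j. a * p$j - E j + (\<Sum>i\<in>UNIV. q$i * Z$i$j))"
  shows "(row_times q (vfrac (of_int a *\<^sub>R X + C)) + (\<chi> j. real_of_int (p' $ j)))$j
       = of_int a * (row_times q X + (\<chi> j. real_of_int (p $ j)))$j"
proof -
  have fr: "vfrac (of_int a *\<^sub>R X + C) $ i $ j = of_int a * X$i$j + C$i$j - of_int (Z$i$j)" for i j
    by (simp add: vfrac_def Z_def vfloor_def frac_def)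
  have "(row_times q (vfrac (of_int a *\<^sub>R X + C)) + (\<chi> j. real_of_int (p' $ j)))$j
      = (\<Sum>i\<in>UNIV. real_of_int (q$i) * (of_int a * X$i$j + C$i$j - of_int (Z$i$j)))
        + (of_int a * of_int (p$j) - of_int (E j) + (\<Sum>i\<in>UNIV. of_int (q$i) * of_int (Z$i$j)))"
    by (simp add: row_times_def fr p'_def)
  also have "\<dots> = of_int a * (\<Sum>i\<in>UNIV. real_of_int (q$i) * X$i$j)
        + (\<Sum>i\<in>UNIV. real_of_int (q$i) * C$i$j) - (\<Sum>i\<in>UNIV. real_of_int (q$i) * of_int (Z$i$j))
        + (of_int a * of_int (p$j) - of_int (E j) + (\<Sum>i\<in>UNIV. of_int (q$i) * of_int (Z$i$j)))"
    by (simp add: algebra_simps sum.distrib sum_subtractf sum_distrib_left)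
  also have "\<dots> = of_int a * (row_times q X + (\<chi> j. real_of_int (p $ j)))$j"
    using e[of j] by (simp add: row_times_def algebra_simps)
  finally show ?thesis .
qed

lemma transport:
  fixes X C :: "real^'m^'n" and a :: int
  assumes inf: "infinite (sols v \<Psi> k P X)" and a: "a > 0"
    and e: "\<And>q j. P q \<Longrightarrow> (\<Sum>i\<in>UNIV. real_of_int (q$i) * C$i$j) = real_of_int (E q j)"
    and adm: "\<And>p q. P q \<Longrightarrow> q \<noteq> 0 \<Longrightarrow> admissible v p q \<Longrightarrow>
        admissible v (\<chi> j. a * p$j - E q j + (\<Sum>i\<in>UNIV. q$i * vfloor (of_int a *\<^sub>R X + C)$i$j)) q"
  shows "infinite (sols v \<Psi> (nat a * k) P (vfrac (of_int a *\<^sub>R X + C)))"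
proof
  let ?Z = "vfloor (of_int a *\<^sub>R X + C)"
  define f where "f pq = ((\<chi> j. a * fst pq$j - E (snd pq) j + (\<Sum>i\<in>UNIV. snd pq$i * ?Z$i$j)), snd pq)" for pq :: "(int^'m) \<times> (int^'n)"
  assume fin: "finite (sols v \<Psi> (nat a * k) P (vfrac (of_int a *\<^sub>R X + C)))"
  have sub: "f ` sols v \<Psi> k P X \<subseteq> sols v \<Psi> (nat a * k) P (vfrac (of_int a *\<^sub>R X + C))"
  proof
    fix y assume "y \<in> f ` sols v \<Psi> k P X"
    then obtain p q where pq: "(p,q) \<in> sols v \<Psi> k P X" and y: "y = f (p,q)" by auto
    have s: "q \<noteq> 0" "admissible v p q" "P q"
        "sup_norm (row_times q X + (\<chi> j. real_of_int (p $ j))) < real k * \<Psi> q"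
      using pq by (auto simp: sols_def)
    let ?p' = "(\<chi> j. a * p$j - E q j + (\<Sum>i\<in>UNIV. q$i * ?Z$i$j)) :: int^'m"
    have "\<forall>j. \<bar>(row_times q (vfrac (of_int a *\<^sub>R X + C)) + (\<chi> j. real_of_int (?p' $ j)))$j\<bar> < real (nat a * k) * \<Psi> q"
    proof
      fix j
      have "(row_times q (vfrac (of_int a *\<^sub>R X + C)) + (\<chi> j. real_of_int (?p' $ j)))$j
          = of_int a * (row_times q X + (\<chi> j. real_of_int (p $ j)))$j"
        by (rule affine_identity[of q C "E q" a X p j]) (rule e[OF s(3)])
      moreover have "\<bar>(row_times q X + (\<chi> j. real_of_int (p $ j)))$j\<bar> < real k * \<Psi> q"
        using s(4) sup_norm_less by blast
      moreover have "real (nat a * k) = of_int a * real k" using a by simp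
      ultimately show "\<bar>(row_times q (vfrac (of_int a *\<^sub>R X + C)) + (\<chi> j. real_of_int (?p' $ j)))$j\<bar> < real (nat a * k) * \<Psi> q"
        using a by (simp add: abs_mult)
    qed
    then have "sup_norm (row_times q (vfrac (of_int a *\<^sub>R X + C)) + (\<chi> j. real_of_int (?p' $ j))) < real (nat a * k) * \<Psi> q"
      using sup_norm_less by blast
    moreover have "admissible v ?p' q" using adm[OF s(3) s(1) s(2)] .
    ultimately show "y \<in> sols v \<Psi> (nat a * k) P (vfrac (of_int a *\<^sub>R X + C))"
      using s y by (simp add: sols_def f_def)
  qed
  have "inj f"
  proof (rule injI)
    fix x y assume "f x = f y"
    then have sn: "snd x = snd y" and c: "\<And>j. a * fst x$j - E (snd x) j + (\<Sum>i\<in>UNIV. snd x$i * ?Z$i$j) = a * fst y$j - E (snd y) j + (\<Sum>i\<in>UNIV. snd y$i * ?Z$i$j)"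
      by (auto simp: f_def vec_eq_iff)
    have "a * fst x$j = a * fst y$j" for j using c[of j] sn by simp
    then have "fst x = fst y" using a by (simp add: vec_eq_iff)
    then show "x = y" using sn by (simp add: prod_eq_iff)
  qed
  then have "infinite (f ` sols v \<Psi> k P X)" using inf finite_imageD inj_on_subset by (metis subset_UNIV)
  then show False using sub fin finite_subset by blast
qed

definition Pc :: "variant \<Rightarrow> (int^'n \<Rightarrow> real) \<Rightarrow> nat \<Rightarrow> 'n \<Rightarrow> (real^'m^'n) set" where
  "Pc v \<Psi> t i = (\<Union>k\<in>{1..}. {X \<in> unit_cube. infinite (sols v \<Psi> k (\<lambda>q. (\<forall>r. (2::int)^t dvd q$r) \<and> \<not> (2::int)^(t+1) dvd q$i) X)})"

definition Finf :: "variant \<Rightarrow> (int^'n \<Rightarrow> real) \<Rightarrow> (real^'m^'n) set" where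
  "Finf v \<Psi> = (\<Union>k\<in>{1..}. {X \<in> unit_cube. \<forall>s. infinite (sols v \<Psi> k (\<lambda>q. \<forall>r. (2::int)^s dvd q$r) X)})"

definition ct :: "nat \<Rightarrow> 'n \<Rightarrow> real^'m^'n" where
  "ct t i = (\<chi> r j. if r = i then 1/2^t else 0)"

lemma vfrac_unit_cube: "vfrac X \<in> unit_cube"
  using vfrac_in_hcube[of X] hcube_sub(1) unit_cube_cbox by blast

lemma Pc_inv:
  fixes i :: "'n::finite" and X :: "real^'m^'n"
  assumes X: "X \<in> Pc v \<Psi> t i"
  shows "vfrac (2 *\<^sub>R X + ct t i) \<in> Pc v \<Psi> t i"
proof -
  let ?P = "\<lambda>q::int^'n. (\<forall>r. (2::int)^t dvd q$r) \<and> \<not> (2::int)^(t+1) dvd q$i"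
  obtain k where k: "k \<ge> 1" "infinite (sols v \<Psi> k ?P X)" using X by (auto simp: Pc_def)
  have "infinite (sols v \<Psi> (nat 2 * k) ?P (vfrac (of_int 2 *\<^sub>R X + ct t i)))"
  proof (rule transport[OF k(2), where E = "\<lambda>q j. q$i div 2^t"])
    fix q :: "int^'n" and j assume Pq: "?P q"
    have "(\<Sum>r\<in>UNIV. real_of_int (q$r) * ct t i $ r $ j) = (\<Sum>r\<in>UNIV. if r = i then real_of_int (q$r) / 2^t else 0)"
      by (rule sum.cong) (auto simp: ct_def)
    also have "\<dots> = real_of_int (q$i) / 2^t" by simp
    also have "\<dots> = real_of_int (q$i div 2^t)" using Pq by (simp add: real_of_int_div)
    finally show "(\<Sum>r\<in>UNIV. real_of_int (q$r) * ct t i $ r $ j) = real_of_int (q$i div 2^t)" .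
  next
    fix p :: "int^'m" and q :: "int^'n" assume Pq: "?P q" and q: "q \<noteq> 0" and adm: "admissible v p q"
    show "admissible v (\<chi> j. 2 * p$j - q$i div 2^t + (\<Sum>r\<in>UNIV. q$r * vfloor (of_int 2 *\<^sub>R X + ct t i)$r$j)) q"
    proof (rule adm_transfer[OF adm q])
      fix d j assume d: "prime d" "\<forall>r. d dvd q$r"
        and dv: "d dvd (\<chi> j. 2 * p$j - q$i div 2^t + (\<Sum>r\<in>UNIV. q$r * vfloor (of_int 2 *\<^sub>R X + ct t i)$r$j)) $ j"
      show "d dvd p$j"
        by (rule NT1[where Z="vfloor (of_int 2 *\<^sub>R X + ct t i)" and t=t and i=i]) (use Pq d dv in auto)
    qed
  qed simp
  then have "infinite (sols v \<Psi> (2 * k) ?P (vfrac (2 *\<^sub>R X + ct t i)))" by simp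
  moreover have "2 * k \<ge> 1" using k by simp
  ultimately show ?thesis using vfrac_unit_cube unfolding Pc_def by blast
qed

lemma Finf_inv:
  fixes X :: "real^'m^'n"
  assumes X: "X \<in> Finf v \<Psi>"
  shows "vfrac (X + (1/2^s) *\<^sub>R ofv W) \<in> Finf v \<Psi>"
proof -
  let ?P = "\<lambda>s (q::int^'n). \<forall>r. (2::int)^s dvd q$r"
  obtain k where k: "k \<ge> 1" "\<And>s. infinite (sols v \<Psi> k (?P s) X)" using X by (auto simp: Finf_def)
  let ?C = "(1/2^s) *\<^sub>R ofv W"
  have "infinite (sols v \<Psi> k (?P s') (vfrac (X + ?C)))" for s'
  proof -
    let ?s = "max s' (Suc s)"
    have sdiv: "(2::int)^s dvd 2^?s" "(2::int)^s' dvd 2^?s" "(2::int)^(s+1) dvd 2^?s"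
      by (rule le_imp_power_dvd, simp)+
    have "infinite (sols v \<Psi> (nat 1 * k) (?P ?s) (vfrac (of_int 1 *\<^sub>R X + ?C)))"
    proof (rule transport[OF k(2)[of ?s], where E = "\<lambda>q j. \<Sum>r\<in>UNIV. (q$r div 2^s) * W$r$j"])
      fix q :: "int^'n" and j assume Pq: "?P ?s q"
      have dq: "(2::int)^s dvd q$r" for r using Pq sdiv(1) dvd_trans by blast
      have "(\<Sum>r\<in>UNIV. real_of_int (q$r) * ?C $ r $ j) = (\<Sum>r\<in>UNIV. real_of_int (q$r div 2^s) * real_of_int (W$r$j))"
      proof (rule sum.cong)
        fix r
        have "real_of_int (q$r div 2^s) = real_of_int (q$r) / 2^s" using dq[of r] by (simp add: real_of_int_div)
        then show "real_of_int (q$r) * ?C $ r $ j = real_of_int (q$r div 2^s) * real_of_int (W$r$j)" by simp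
      qed simp
      also have "\<dots> = real_of_int (\<Sum>r\<in>UNIV. (q$r div 2^s) * W$r$j)" by simp
      finally show "(\<Sum>r\<in>UNIV. real_of_int (q$r) * ?C $ r $ j) = real_of_int (\<Sum>r\<in>UNIV. (q$r div 2^s) * W$r$j)" .
    next
      fix p :: "int^'m" and q :: "int^'n" assume Pq: "?P ?s q" and q: "q \<noteq> 0" and adm: "admissible v p q"
      have dq: "(2::int)^(s+1) dvd q$r" for r using Pq sdiv(3) dvd_trans by blast
      show "admissible v (\<chi> j. 1 * p$j - (\<Sum>r\<in>UNIV. (q$r div 2^s) * W$r$j) + (\<Sum>r\<in>UNIV. q$r * vfloor (of_int 1 *\<^sub>R X + ?C)$r$j)) q"
      proof (rule adm_transfer[OF adm q])
        fix d j assume d: "prime d" "\<forall>r. d dvd q$r"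
          and dv: "d dvd (\<chi> j. 1 * p$j - (\<Sum>r\<in>UNIV. (q$r div 2^s) * W$r$j) + (\<Sum>r\<in>UNIV. q$r * vfloor (of_int 1 *\<^sub>R X + ?C)$r$j)) $ j"
        show "d dvd p$j"
          by (rule NT2[where Z="vfloor (of_int 1 *\<^sub>R X + ?C)" and W=W and s=s]) (use dq d dv in auto)
      qed
    qed simp
    then have inf: "infinite (sols v \<Psi> k (?P ?s) (vfrac (X + ?C)))" by simp
    have "sols v \<Psi> k (?P ?s) (vfrac (X + ?C)) \<subseteq> sols v \<Psi> k (?P s') (vfrac (X + ?C))"
      by (rule sols_mono) (use sdiv(2) dvd_trans in blast)
    then show ?thesis using inf finite_subset by blast
  qed
  then show ?thesis using k(1) vfrac_unit_cube unfolding Finf_def by blast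
qed

lemma exists_level:
  fixes q :: "int^'n"
  shows "\<not> (\<forall>r. (2::int)^s dvd q$r) \<Longrightarrow> \<exists>t<s. \<exists>i. (\<forall>r. (2::int)^t dvd q$r) \<and> \<not> (2::int)^(t+1) dvd q$i"
proof (induction s)
  case 0 then show ?case by simp
next
  case (Suc s)
  show ?case
  proof (cases "\<forall>r. (2::int)^s dvd q$r")
    case True
    then show ?thesis using Suc.prems by (metis Suc_eq_plus1 lessI)
  next
    case False
    then show ?thesis using Suc.IH less_SucI by blast
  qed
qed

lemma F_cover: "F_set v \<Psi> \<subseteq> Finf v \<Psi> \<union> (\<Union>t. \<Union>i. Pc v \<Psi> t i)"
proof
  fix X assume "X \<in> F_set v \<Psi>"
  then obtain k where k: "k \<ge> 1" "X \<in> unit_cube" "infinite (sols v \<Psi> k (\<lambda>_. True) X)"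
    by (auto simp: F_set_def approx_set_sols)
  show "X \<in> Finf v \<Psi> \<union> (\<Union>t. \<Union>i. Pc v \<Psi> t i)"
  proof (cases "\<forall>s. infinite (sols v \<Psi> k (\<lambda>q. \<forall>r. (2::int)^s dvd q$r) X)")
    case True
    then have "X \<in> Finf v \<Psi>" using k by (auto simp: Finf_def)
    then show ?thesis by blast
  next
    case False
    then obtain s where fin: "finite (sols v \<Psi> k (\<lambda>q. \<forall>r. (2::int)^s dvd q$r) X)" by blast
    let ?S = "\<lambda>t i. sols v \<Psi> k (\<lambda>q. (\<forall>r. (2::int)^t dvd q$r) \<and> \<not> (2::int)^(t+1) dvd q$i) X"
    have "sols v \<Psi> k (\<lambda>_. True) X \<subseteq> sols v \<Psi> k (\<lambda>q. \<forall>r. (2::int)^s dvd q$r) X \<union> (\<Union>t\<in>{..<s}. \<Union>i. ?S t i)"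
    proof
      fix x assume x: "x \<in> sols v \<Psi> k (\<lambda>_. True) X"
      obtain p q where pq: "x = (p, q)" by force
      show "x \<in> sols v \<Psi> k (\<lambda>q. \<forall>r. (2::int)^s dvd q$r) X \<union> (\<Union>t\<in>{..<s}. \<Union>i. ?S t i)"
      proof (cases "\<forall>r. (2::int)^s dvd q$r")
        case True then show ?thesis using x pq by (auto simp: sols_def)
      next
        case False
        then obtain t i where "t < s" "(\<forall>r. (2::int)^t dvd q$r) \<and> \<not> (2::int)^(t+1) dvd q$i"
          using exists_level by blast
        then show ?thesis using x pq by (auto simp: sols_def)
      qed
    qed
    then have "infinite (sols v \<Psi> k (\<lambda>q. \<forall>r. (2::int)^s dvd q$r) X \<union> (\<Union>t\<in>{..<s}. \<Union>i. ?S t i))"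
      using k(3) finite_subset by blast
    then have "infinite (\<Union>t\<in>{..<s}. \<Union>i. ?S t i)" using fin by simp
    then obtain t i where "infinite (?S t i)" by auto
    then have "X \<in> Pc v \<Psi> t i" using k by (auto simp: Pc_def)
    then show ?thesis by blast
  qed
qed

lemma Pc_sub: "Pc v \<Psi> t i \<subseteq> F_set v \<Psi>"
proof
  fix X assume "X \<in> Pc v \<Psi> t i"
  then obtain k where k: "k \<ge> 1" "X \<in> unit_cube"
     "infinite (sols v \<Psi> k (\<lambda>q. (\<forall>r. (2::int)^t dvd q$r) \<and> \<not> (2::int)^(t+1) dvd q$i) X)"
    by (auto simp: Pc_def)
  moreover have "sols v \<Psi> k (\<lambda>q. (\<forall>r. (2::int)^t dvd q$r) \<and> \<not> (2::int)^(t+1) dvd q$i) X \<subseteq> sols v \<Psi> k (\<lambda>_. True) X"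
    by (rule sols_mono) simp
  ultimately show "X \<in> F_set v \<Psi>" unfolding F_set_def approx_set_sols using finite_subset by blast
qed

lemma Finf_sub: "Finf v \<Psi> \<subseteq> F_set v \<Psi>"
proof
  fix X assume "X \<in> Finf v \<Psi>"
  then obtain k where k0: "k \<ge> 1" "X \<in> unit_cube"
     "\<forall>s. infinite (sols v \<Psi> k (\<lambda>q. \<forall>r. (2::int)^s dvd q$r) X)"
    by (auto simp: Finf_def)
  then have k: "k \<ge> 1" "X \<in> unit_cube" "infinite (sols v \<Psi> k (\<lambda>q. \<forall>r. (2::int)^0 dvd q$r) X)"
    by blast+
  moreover have "sols v \<Psi> k (\<lambda>q. \<forall>r. (2::int)^0 dvd q$r) X \<subseteq> sols v \<Psi> k (\<lambda>_. True) X"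
    by (rule sols_mono) simp
  ultimately show "X \<in> F_set v \<Psi>" unfolding F_set_def approx_set_sols using finite_subset by blast
qed

definition height :: "(int^'m) \<times> (int^'n) \<Rightarrow> nat" where
  "height pq = (\<Sum>j\<in>UNIV. nat \<bar>fst pq $ j\<bar>) + (\<Sum>i\<in>UNIV. nat \<bar>snd pq $ i\<bar>)"

lemma finite_height: "finite {pq :: (int^'m) \<times> (int^'n). height pq \<le> N}"
proof -
  have "{pq :: (int^'m) \<times> (int^'n). height pq \<le> N} \<subseteq> {p. \<forall>j. p$j \<in> {-int N..int N}} \<times> {q. \<forall>i. q$i \<in> {-int N..int N}}"
  proof
    fix pq :: "(int^'m) \<times> (int^'n)" assume h: "pq \<in> {pq. height pq \<le> N}"
    have a: "nat \<bar>fst pq $ j\<bar> \<le> N" for j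
    proof -
      have "nat \<bar>fst pq $ j\<bar> \<le> (\<Sum>j\<in>UNIV. nat \<bar>fst pq $ j\<bar>)" by (rule member_le_sum) auto
      then show ?thesis using h by (simp add: height_def)
    qed
    have b: "nat \<bar>snd pq $ i\<bar> \<le> N" for i
    proof -
      have "nat \<bar>snd pq $ i\<bar> \<le> (\<Sum>i\<in>UNIV. nat \<bar>snd pq $ i\<bar>)" by (rule member_le_sum) auto
      then show ?thesis using h by (simp add: height_def)
    qed
    show "pq \<in> {p. \<forall>j. p$j \<in> {-int N..int N}} \<times> {q. \<forall>i. q$i \<in> {-int N..int N}}"
      using a b by (auto simp: mem_Times_iff) (smt (verit, best) nat_le_iff)+
  qed
  moreover have "finite ({p :: int^'m. \<forall>j. p$j \<in> {-int N..int N}} \<times> {q :: int^'n. \<forall>i. q$i \<in> {-int N..int N}})"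
    by (intro finite_cartesian_product finite_vec_set) auto
  ultimately show ?thesis by (rule finite_subset)
qed

lemma infinite_iff_height: "infinite (A :: ((int^'m) \<times> (int^'n)) set) \<longleftrightarrow> (\<forall>N. \<exists>x\<in>A. height x > N)"
proof
  assume inf: "infinite A"
  show "\<forall>N. \<exists>x\<in>A. height x > N"
  proof
    fix N
    show "\<exists>x\<in>A. height x > N"
    proof (rule ccontr)
      assume "\<not> (\<exists>x\<in>A. height x > N)"
      then have "A \<subseteq> {pq. height pq \<le> N}" by auto
      then show False using inf finite_height finite_subset by blast
    qed
  qed
next
  assume h: "\<forall>N. \<exists>x\<in>A. height x > N"
  show "infinite A"
  proof
    assume "finite A"
    then have "finite (height ` A)" by simp
    then obtain N where "\<forall>x\<in>height ` A. x \<le> N" using finite_nat_set_iff_bounded_le by blast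
    then show False using h not_le by fastforce
  qed
qed

lemma open_sol_set: "open {X :: real^'m^'n. sup_norm (row_times q X + (\<chi> j. real_of_int (p $ j))) < c}"
proof -
  have "{X :: real^'m^'n. sup_norm (row_times q X + (\<chi> j. real_of_int (p $ j))) < c}
      = (\<Inter>j\<in>UNIV. {X. \<bar>(\<Sum>i\<in>UNIV. real_of_int (q $ i) * X $ i $ j) + real_of_int (p$j)\<bar> < c})"
    by (auto simp: sup_norm_less row_times_def)
  also have "open \<dots>"
    by (rule open_INT) (auto intro!: open_Collect_less continuous_intros)
  finally show ?thesis .
qed

lemma sols_set_borel: "{X \<in> (unit_cube :: (real^'m^'n) set). infinite (sols v \<Psi> k P X)} \<in> sets borel"
proof -
  let ?Pset = "{pq :: (int^'m) \<times> (int^'n). snd pq \<noteq> 0 \<and> admissible v (fst pq) (snd pq) \<and> P (snd pq)}"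
  let ?O = "\<lambda>pq. {X :: real^'m^'n. sup_norm (row_times (snd pq) X + (\<chi> j. real_of_int (fst pq $ j))) < real k * \<Psi> (snd pq)}"
  have eq: "{X \<in> (unit_cube :: (real^'m^'n) set). infinite (sols v \<Psi> k P X)}
      = unit_cube \<inter> (\<Inter>N. \<Union>pq\<in>{pq\<in>?Pset. height pq > N}. ?O pq)"
    by (auto simp: infinite_iff_height sols_def; blast)
  have "open (\<Union>pq\<in>{pq\<in>?Pset. height pq > N}. ?O pq)" for N
    using open_sol_set by blast
  then have "(\<Inter>N. \<Union>pq\<in>{pq\<in>?Pset. height pq > N}. ?O pq) \<in> sets borel"
    by (intro sets.countable_INT') auto
  moreover have "(unit_cube :: (real^'m^'n) set) \<in> sets borel" by (simp add: unit_cube_cbox)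
  ultimately show ?thesis unfolding eq by simp
qed

lemma borel_lebesgue: "A \<in> sets borel \<Longrightarrow> A \<in> sets (lebesgue :: 'a::euclidean_space measure)"
  by (simp add: sets_completionI_sets)

lemma Pc_borel: "Pc v \<Psi> t i \<in> sets borel"
  unfolding Pc_def by (intro sets.countable_UN') (auto intro!: sols_set_borel)

lemma uc_borel: "(unit_cube :: (real^'m^'n) set) \<in> sets borel" by (simp add: unit_cube_cbox)

lemma Finf_borel: "Finf v \<Psi> \<in> sets borel"
proof -
  have "Finf v \<Psi> = (\<Union>k\<in>{1..}. unit_cube \<inter> (\<Inter>s. {X \<in> unit_cube. infinite (sols v \<Psi> k (\<lambda>q. \<forall>r. (2::int)^s dvd q$r) X)}))"
    unfolding Finf_def by blast
  also have "\<dots> \<in> sets borel"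
    using uc_borel by (intro sets.countable_UN') (auto intro!: sets.Int sets.countable_INT' sols_set_borel)
  finally show ?thesis .
qed

lemma F_borel: "F_set v \<Psi> \<in> sets borel"
  unfolding F_set_def approx_set_sols by (intro sets.countable_UN') (auto intro!: sols_set_borel)

lemma cube_minus_hcube_null: "(unit_cube - hcube :: (real^'m^'n) set) \<in> null_sets lebesgue"
proof -
  have sub: "(unit_cube - hcube :: (real^'m^'n) set) \<subseteq> (\<Union>i\<in>UNIV. \<Union>j\<in>UNIV. {X. X \<bullet> axis i (axis j 1) = 1})"
    by (force simp: unit_cube_def hcube_def inner_nested less_le)
  have "(\<Union>i\<in>UNIV. \<Union>j\<in>UNIV. {X :: real^'m^'n. X \<bullet> axis i (axis j 1) = 1}) \<in> null_sets lebesgue"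
  proof (intro null_sets.finite_UN)
    fix i j
    have "axis i (axis j 1) \<in> (Basis :: (real^'m^'n) set)" by (auto simp: Basis_vec_def)
    then show "{X :: real^'m^'n. X \<bullet> axis i (axis j 1) = 1} \<in> null_sets lebesgue"
      using negligible_standard_hyperplane negligible_iff_null_sets by blast
  qed simp_all
  moreover have "(unit_cube - hcube :: (real^'m^'n) set) \<in> sets lebesgue"
    by (intro sets.Diff borel_lebesgue) (auto simp: unit_cube_cbox hcube_borel)
  ultimately show ?thesis using sub null_sets_subset by blast
qed

lemma measure_zero_null: "A \<in> lmeasurable \<Longrightarrow> measure lebesgue A = 0 \<Longrightarrow> A \<in> null_sets lebesgue"
  by (simp add: null_sets_def emeasure_eq_measure2 fmeasurableD)

theorem theorem2:
  fixes \<Psi> :: "int ^ 'n \<Rightarrow> real" and v :: variant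
  assumes "\<forall>q. \<Psi> q > 0"
  shows "(F_set v \<Psi> :: (real ^ 'm ^ 'n) set) \<in> sets lebesgue \<and>
         (emeasure lebesgue (F_set v \<Psi> :: (real ^ 'm ^ 'n) set) = 0 \<or>
          emeasure lebesgue (F_set v \<Psi> :: (real ^ 'm ^ 'n) set) = 1)"
proof -
  define F where "F = (F_set v \<Psi> :: (real ^ 'm ^ 'n) set)"
  have Fm: "F \<in> sets lebesgue" unfolding F_def by (rule borel_lebesgue[OF F_borel])
  have Fc: "F \<subseteq> unit_cube" unfolding F_def F_set_def approx_set_def by blast
  have Fl: "F \<in> lmeasurable"
    by (rule fmeasurableI2[OF lmeasurable_cbox[of 0 One]]) (use Fm Fc unit_cube_cbox in auto)
  have FH: "F \<inter> hcube \<in> sets lebesgue" using Fm hcube_borel borel_lebesgue by blast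
  have FHl: "F \<inter> hcube \<in> lmeasurable" by (rule fmeasurableI2[OF Fl]) (use FH in auto)
  have mF: "measure lebesgue F = measure lebesgue (F \<inter> hcube)"
  proof -
    have "F \<inter> hcube = F - (unit_cube - hcube)" using Fc by blast
    then show ?thesis using measure_Diff_null_set[OF Fm cube_minus_hcube_null] by simp
  qed
  have le1: "measure lebesgue (F \<inter> hcube) \<le> 1"
    using measure_mono_fmeasurable[OF _ FH hcube_lmeasurable] measure_hcube[where 'm='m and 'n='n] by auto
  define G where "G t i = (Pc v \<Psi> t i \<inter> hcube :: (real^'m^'n) set)" for t i
  have Gm: "G t i \<in> sets lebesgue" for t i
    unfolding G_def using Pc_borel hcube_borel borel_lebesgue by blast
  have G01: "measure lebesgue (G t i) = 0 \<or> measure lebesgue (G t i) = 1" for t i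
  proof (rule L2[OF Gm, where c = "ct t i"])
    show "G t i \<subseteq> hcube" by (simp add: G_def)
    fix X assume "X \<in> G t i"
    then show "vfrac (2 *\<^sub>R X + ct t i) \<in> G t i"
      using Pc_inv[of X v \<Psi> t i] vfrac_in_hcube by (auto simp: G_def)
  qed
  have GF: "G t i \<subseteq> F \<inter> hcube" for t i using Pc_sub unfolding G_def F_def by blast
  define E where "E = (Finf v \<Psi> \<inter> hcube :: (real^'m^'n) set)"
  have Em: "E \<in> sets lebesgue" unfolding E_def using Finf_borel hcube_borel borel_lebesgue by blast
  have E01: "measure lebesgue E = 0 \<or> measure lebesgue E = 1"
  proof (rule L1[OF Em])
    show "E \<subseteq> hcube" by (simp add: E_def)
    fix X s W assume "X \<in> E"
    then show "vfrac (X + (1/2^s) *\<^sub>R ofv W) \<in> E"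
      using Finf_inv[of X v \<Psi> s W] vfrac_in_hcube by (auto simp: E_def)
  qed
  have EF: "E \<subseteq> F \<inter> hcube" using Finf_sub unfolding E_def F_def by blast
  have "measure lebesgue (F \<inter> hcube) = 0 \<or> measure lebesgue (F \<inter> hcube) = 1"
  proof (cases "\<exists>t i. measure lebesgue (G t i) = 1")
    case True
    then obtain t i where "measure lebesgue (G t i) = 1" by blast
    moreover have "measure lebesgue (G t i) \<le> measure lebesgue (F \<inter> hcube)"
      by (rule measure_mono_fmeasurable[OF GF Gm FHl])
    ultimately show ?thesis using le1 by simp
  next
    case False
    then have G0: "measure lebesgue (G t i) = 0" for t i using G01 by blast
    have Gn: "G t i \<in> null_sets lebesgue" for t i
      by (rule measure_zero_null[OF fmeasurableI2[OF FHl GF[of t i] Gm] G0])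
    have N: "(\<Union>t. \<Union>i\<in>UNIV. G t i) \<in> null_sets lebesgue"
      by (intro null_sets_UN null_sets.finite_UN) (simp_all add: Gn)
    have D: "(F \<inter> hcube) - E \<in> null_sets lebesgue"
    proof (rule null_sets_subset[OF N])
      show "(F \<inter> hcube) - E \<in> sets lebesgue" using FH Em by blast
      show "(F \<inter> hcube) - E \<subseteq> (\<Union>t. \<Union>i\<in>UNIV. G t i)"
        using F_cover[of v \<Psi>] unfolding F_def E_def G_def by blast
    qed
    have "F \<inter> hcube = E \<union> ((F \<inter> hcube) - E)" using EF by blast
    then have "measure lebesgue (F \<inter> hcube) = measure lebesgue E"
      using measure_Un_null_set[OF Em D] by simp
    then show ?thesis using E01 by simp
  qed
  then have "measure lebesgue F = 0 \<or> measure lebesgue F = 1" using mF by simp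
  then have "emeasure lebesgue F = 0 \<or> emeasure lebesgue F = 1"
    using Fl by (auto simp: emeasure_eq_measure2)
  then show ?thesis using Fm unfolding F_def by simp
qed


end
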